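(* Let $A$ be a finite set with $|A|\ge3$. The minimal u-closed monoids $M\le A^A$ are exactly the monoids of the form $M_f=\langle f\rangle\cup C$ where $f\in A^A\setminus T$ satisfies one of: (I) $f^2=f$; (II$'$) $f^2$ is a constant and $|A|\ge4$; (III$'$) $f^p=\mathrm{id}_A$ for some prime $p$, and $f$ has at least two fixed points or $f$ has at least two cycles of length $p$. In particular, every minimal u-closed monoid is $C$-minimal.
   Context: $C$ is the set of all constant unary maps on $A$, $T=\{\mathrm{id}_A\}\cup C$, and $\langle f\rangle$ is the submonoid of $A^A$ generated by $f$. A translation of an $n$-ary operation $g$ on $A$ is $x\mapsto g(a_1,\dots,a_{i-1},x,a_{i+1},\dots,a_n)$ with fixed $a_j\in A$; $\mathrm{trl}(g)$ is the set of translations ($\{g\}$ for unary $g$); $N^*:=\{g\mid\mathrm{trl}(g)\subseteq N\}$ for $N\subseteq A^A$. The u-closure $\overline M$ of $M\subseteq A^A$ is the intersection of all monoids $N$ with $M\subseteq N\le A^A$ such that $N^*$ is a clone; $M$ is u-closed if $\overline M=M$. A minimal u-closed monoid is a u-closed monoid $M\le A^A$ with $T\subsetneq M$ such that every u-closed monoid properly contained in $M$ equals $T$. A monoid $M\le A^A$ is $C$-minimal if $T\subsetneq M$ and there is no monoid $N$ with $T\subsetneq N\subsetneq M$. *)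

theory Defs
  imports "HOL-Computational_Algebra.Primes"
begin

text \<open>Unary maps on A are functions 'a => 'a; A is the (finite) universe of type 'a.
  A finitary operation of arity n >= 1 is a pair (n, g) with g :: 'a list => 'a,
  of which only the values on lists of length n are relevant.\<close>

definition is_monoid :: "('a \<Rightarrow> 'a) set \<Rightarrow> bool" where
  "is_monoid M \<longleftrightarrow> id \<in> M \<and> (\<forall>f\<in>M. \<forall>g\<in>M. f \<circ> g \<in> M)"

definition consts_maps :: "('a \<Rightarrow> 'a) set" ("\<C>") where
  "consts_maps = range (\<lambda>c. \<lambda>_. c)"

definition T_maps :: "('a \<Rightarrow> 'a) set" ("\<T>") where
  "T_maps = insert id consts_maps"

definition gen_monoid :: "('a \<Rightarrow> 'a) \<Rightarrow> ('a \<Rightarrow> 'a) set" where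
  "gen_monoid f = range (\<lambda>n. f ^^ n)"

definition trl :: "nat \<Rightarrow> ('a list \<Rightarrow> 'a) \<Rightarrow> ('a \<Rightarrow> 'a) set" where
  "trl n g = {(\<lambda>x. g (as[i := x])) | as i. length as = n \<and> i < n}"

definition star :: "('a \<Rightarrow> 'a) set \<Rightarrow> (nat \<times> ('a list \<Rightarrow> 'a)) set" where
  "star N = {(n, g). 1 \<le> n \<and> trl n g \<subseteq> N}"

definition is_clone :: "(nat \<times> ('a list \<Rightarrow> 'a)) set \<Rightarrow> bool" where
  "is_clone Cl \<longleftrightarrow>
     (\<forall>(n, g) \<in> Cl. 1 \<le> n) \<and>
     (\<forall>n i. 1 \<le> n \<longrightarrow> i < n \<longrightarrow> (n, \<lambda>xs. xs ! i) \<in> Cl) \<and>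
     (\<forall>n m f gs. (n, f) \<in> Cl \<longrightarrow> 1 \<le> m \<longrightarrow> (\<forall>i<n. (m, gs i) \<in> Cl) \<longrightarrow>
        (m, \<lambda>xs. f (map (\<lambda>i. gs i xs) [0..<n])) \<in> Cl)"

definition u_closure :: "('a \<Rightarrow> 'a) set \<Rightarrow> ('a \<Rightarrow> 'a) set" where
  "u_closure M = \<Inter>{N. M \<subseteq> N \<and> is_monoid N \<and> is_clone (star N)}"

definition u_closed :: "('a \<Rightarrow> 'a) set \<Rightarrow> bool" where
  "u_closed M \<longleftrightarrow> u_closure M = M"

definition minimal_u_closed :: "('a \<Rightarrow> 'a) set \<Rightarrow> bool" where
  "minimal_u_closed M \<longleftrightarrow> is_monoid M \<and> u_closed M \<and> \<T> \<subset> M \<and>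
     (\<forall>N. is_monoid N \<and> u_closed N \<and> N \<subset> M \<longrightarrow> N = \<T>)"

definition C_minimal :: "('a \<Rightarrow> 'a) set \<Rightarrow> bool" where
  "C_minimal M \<longleftrightarrow> is_monoid M \<and> \<T> \<subset> M \<and>
     \<not> (\<exists>N. is_monoid N \<and> \<T> \<subset> N \<and> N \<subset> M)"

definition M_of :: "('a \<Rightarrow> 'a) \<Rightarrow> ('a \<Rightarrow> 'a) set" where
  "M_of f = gen_monoid f \<union> \<C>"

definition orbit_of :: "('a \<Rightarrow> 'a) \<Rightarrow> 'a \<Rightarrow> 'a set" where
  "orbit_of f x = range (\<lambda>n. (f ^^ n) x)"

definition cycles_of_length :: "('a \<Rightarrow> 'a) \<Rightarrow> nat \<Rightarrow> 'a set set" where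
  "cycles_of_length f p = {orbit_of f x | x. card (orbit_of f x) = p}"

end

theory Submission
  imports Defs
begin


definition DC :: "('a \<Rightarrow> 'a) set \<Rightarrow> bool" where
  "DC N \<longleftrightarrow> (\<forall>h. (\<forall>a. h a \<in> N) \<longrightarrow> (\<forall>b. (\<lambda>x. h x b) \<in> N) \<longrightarrow> (\<lambda>x. h x x) \<in> N)"

lemma const_in_C: "(\<lambda>_. c) \<in> \<C>"
  by (simp add: consts_maps_def)

lemma in_C_iff: "g \<in> \<C> \<longleftrightarrow> (\<exists>c. g = (\<lambda>_. c))"
  by (auto simp: consts_maps_def)

lemma T_iff: "g \<in> \<T> \<longleftrightarrow> g = id \<or> g \<in> \<C>"
  by (simp add: T_maps_def)

lemma monoid_comp: "is_monoid N \<Longrightarrow> f \<in> N \<Longrightarrow> g \<in> N \<Longrightarrow> f \<circ> g \<in> N"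
  by (simp add: is_monoid_def)

lemma monoid_id: "is_monoid N \<Longrightarrow> id \<in> N"
  by (simp add: is_monoid_def)

lemma monoid_pow: "is_monoid N \<Longrightarrow> f \<in> N \<Longrightarrow> f ^^ n \<in> N"
  by (induction n) (auto simp: monoid_id monoid_comp)

lemma trl_sub:
  assumes "length as = n" "i < n"
  shows "(\<lambda>x. g (as[i := x])) \<in> trl n g"
  using assms unfolding trl_def by blast

lemma core:
  assumes mon: "is_monoid N" and TN: "\<T> \<subseteq> N" and dc: "DC N"
  shows "trl n f \<subseteq> N \<Longrightarrow> (\<forall>i<n. t i \<in> N) \<Longrightarrow> (\<lambda>x. f (map (\<lambda>i. t i x) [0..<n])) \<in> N"
proof (induction n arbitrary: f)
  case 0
  have "(\<lambda>x. f (map (\<lambda>i. t i x) [0..<0])) = (\<lambda>_. f [])" by simp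
  moreover have "(\<lambda>_. f []) \<in> N" using TN const_in_C[of "f []"] unfolding T_maps_def by (meson insert_subset subset_iff)
  ultimately show ?case by simp
next
  case (Suc n)
  define H where "H = (\<lambda>x y. f (map (\<lambda>i. t i x) [0..<n] @ [t n y]))"
  have rows: "H a \<in> N" for a
  proof -
    define L where "L = map (\<lambda>i. t i a) [0..<n]"
    have lenL: "length L = n" by (simp add: L_def)
    have tr: "(\<lambda>z. f ((L @ [t n a])[n := z])) \<in> N"
      using Suc.prems(1) trl_sub[of "L @ [t n a]" "Suc n" n f] lenL by auto
    have "H a = (\<lambda>z. f ((L @ [t n a])[n := z])) \<circ> t n"
      unfolding H_def L_def[symmetric] using lenL
      by (auto simp: fun_eq_iff list_update_append)
    then show ?thesis using tr Suc.prems(2) mon monoid_comp by fastforce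
  qed
  have cols: "(\<lambda>x. H x b) \<in> N" for b
  proof -
    define f' where "f' = (\<lambda>ys. f (ys @ [t n b]))"
    have "trl n f' \<subseteq> N"
    proof
      fix k assume "k \<in> trl n f'"
      then obtain as i where k: "k = (\<lambda>x. f' (as[i := x]))" "length as = n" "i < n"
        unfolding trl_def by blast
      have "k = (\<lambda>x. f ((as @ [t n b])[i := x]))"
        using k by (simp add: f'_def list_update_append1)
      moreover have "(\<lambda>x. f ((as @ [t n b])[i := x])) \<in> trl (Suc n) f"
        using k trl_sub[of "as @ [t n b]" "Suc n" i f] by auto
      ultimately show "k \<in> N" using Suc.prems(1) by auto
    qed
    then have "(\<lambda>x. f' (map (\<lambda>i. t i x) [0..<n])) \<in> N"
      using Suc.IH Suc.prems(2) by auto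
    then show ?thesis by (simp add: H_def f'_def)
  qed
  have "(\<lambda>x. H x x) \<in> N" using dc rows cols unfolding DC_def by blast
  then show ?case by (simp add: H_def)
qed

lemma clone_of_DC:
  fixes N :: "('a \<Rightarrow> 'a) set"
  assumes mon: "is_monoid N" and TN: "\<T> \<subseteq> N" and dc: "DC N"
  shows "is_clone (star N)"
  unfolding is_clone_def
proof (intro conjI allI impI)
  show "\<forall>(n, g)\<in>star N. 1 \<le> n" by (auto simp: star_def)
next
  fix n i :: nat assume n: "1 \<le> n" and i: "i < n"
  have "trl n (\<lambda>xs::'a list. xs ! i) \<subseteq> N"
  proof
    fix k assume "k \<in> trl n (\<lambda>xs::'a list. xs ! i)"
    then obtain as j where k: "k = (\<lambda>x. (as[j := x]) ! i)" "length as = n" "j < n"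
      unfolding trl_def by blast
    show "k \<in> N"
    proof (cases "j = i")
      case True
      then have "k = id" using k i by (auto simp: fun_eq_iff)
      then show ?thesis using TN unfolding T_maps_def by auto
    next
      case False
      then have "k = (\<lambda>_. as ! i)" using k i by (auto simp: fun_eq_iff)
      then show ?thesis using TN const_in_C[of "as ! i"] unfolding T_maps_def by (meson insert_subset subset_iff)
    qed
  qed
  then show "(n, \<lambda>xs. xs ! i) \<in> star N" using n by (simp add: star_def)
next
  fix n m :: nat and f :: "'a list \<Rightarrow> 'a" and gs :: "nat \<Rightarrow> 'a list \<Rightarrow> 'a"
  assume f: "(n, f) \<in> star N" and m: "1 \<le> m" and gs: "\<forall>i<n. (m, gs i) \<in> star N"
  have "trl m (\<lambda>xs. f (map (\<lambda>i. gs i xs) [0..<n])) \<subseteq> N"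
  proof
    fix k assume "k \<in> trl m (\<lambda>xs. f (map (\<lambda>i. gs i xs) [0..<n]))"
    then obtain as j where k: "k = (\<lambda>x. f (map (\<lambda>i. gs i (as[j := x])) [0..<n]))"
        "length as = m" "j < m"
      unfolding trl_def by blast
    define t where "t = (\<lambda>i x. gs i (as[j := x]))"
    have "\<forall>i<n. t i \<in> N"
    proof (intro allI impI)
      fix i assume "i < n"
      then have "trl m (gs i) \<subseteq> N" using gs by (auto simp: star_def)
      then show "t i \<in> N" unfolding t_def using trl_sub[OF k(2,3)] by blast
    qed
    moreover have "trl n f \<subseteq> N" using f by (auto simp: star_def)
    ultimately have "(\<lambda>x. f (map (\<lambda>i. t i x) [0..<n])) \<in> N"
      using core[OF mon TN dc] by blast
    then show "k \<in> N" using k by (simp add: t_def)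
  qed
  then show "(m, \<lambda>xs. f (map (\<lambda>i. gs i xs) [0..<n])) \<in> star N"
    using m by (simp add: star_def)
qed

lemma clone_T:
  fixes N :: "('a \<Rightarrow> 'a) set"
  assumes cl: "is_clone (star N)"
  shows "\<T> \<subseteq> N"
proof -
  have p1: "(1, \<lambda>xs. xs ! 0) \<in> star N" using cl unfolding is_clone_def by auto
  have p2: "(2, \<lambda>xs. xs ! 0) \<in> star N" using cl unfolding is_clone_def by auto
  have "(\<lambda>x::'a. ([undefined][0 := x]) ! 0) \<in> trl 1 (\<lambda>xs. xs ! 0)"
    by (rule trl_sub) auto
  then have "id \<in> N" using p1 by (auto simp: star_def id_def)
  moreover have "(\<lambda>_. c) \<in> N" for c
  proof -
    have "(\<lambda>x::'a. ([c, c][1 := x]) ! 0) \<in> trl 2 (\<lambda>xs. xs ! 0)"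
      by (rule trl_sub) auto
    then show ?thesis using p2 by (auto simp: star_def)
  qed
  ultimately show ?thesis by (auto simp: T_maps_def consts_maps_def)
qed

lemma clone_comp:
  assumes "is_clone Cl" "(n, f) \<in> Cl" "1 \<le> m" "\<forall>i<n. (m, gs i) \<in> Cl"
  shows "(m, \<lambda>xs. f (map (\<lambda>i. gs i xs) [0..<n])) \<in> Cl"
proof -
  have "\<forall>n m f gs. (n, f) \<in> Cl \<longrightarrow> 1 \<le> m \<longrightarrow> (\<forall>i<n. (m, gs i) \<in> Cl) \<longrightarrow>
        (m, \<lambda>xs. f (map (\<lambda>i. gs i xs) [0..<n])) \<in> Cl"
    using assms(1) unfolding is_clone_def by (elim conjE)
  then show ?thesis using assms(2-4) by blast
qed

lemma clone_proj:
  assumes "is_clone Cl" "1 \<le> n" "i < n"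
  shows "(n, \<lambda>xs. xs ! i) \<in> Cl"
  using assms unfolding is_clone_def by blast

lemma clone_DC:
  fixes N :: "('a \<Rightarrow> 'a) set"
  assumes cl: "is_clone (star N)"
  shows "DC N"
  unfolding DC_def
proof (intro allI impI)
  fix h :: "'a \<Rightarrow> 'a \<Rightarrow> 'a" assume rows: "\<forall>a. h a \<in> N" and cols: "\<forall>b. (\<lambda>x. h x b) \<in> N"
  define g where "g = (\<lambda>xs. h (xs ! 0) (xs ! 1))"
  have "trl 2 g \<subseteq> N"
  proof
    fix k assume "k \<in> trl 2 g"
    then obtain as i where k: "k = (\<lambda>x. g (as[i := x]))" "length as = 2" "i < 2"
      unfolding trl_def by blast
    obtain a0 a1 where as: "as = [a0, a1]" using k(2)
      by (auto simp: length_Suc_conv numeral_2_eq_2)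
    show "k \<in> N"
    proof (cases "i = 0")
      case True
      then have "k = (\<lambda>x. h x a1)" using k as by (simp add: g_def)
      then show ?thesis using cols by simp
    next
      case False
      then have "i = 1" using k by auto
      then have "k = h a0" using k as by (simp add: g_def fun_eq_iff)
      then show ?thesis using rows by simp
    qed
  qed
  then have g2: "(2, g) \<in> star N" by (simp add: star_def)
  have p: "(1, \<lambda>xs. xs ! 0) \<in> star N" using clone_proj[OF cl] by auto
  have "(1, \<lambda>xs. g (map (\<lambda>i. (\<lambda>i xs. xs ! 0) i xs) [0..<2])) \<in> star N"
    by (rule clone_comp[OF cl g2]) (use p in auto)
  then have "trl 1 (\<lambda>xs. g (map (\<lambda>i. xs ! 0) [0..<2])) \<subseteq> N" by (simp add: star_def)
  moreover have "(\<lambda>x. (\<lambda>xs. g (map (\<lambda>i. xs ! 0) [0..<2])) ([undefined][0 := x]))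
      \<in> trl 1 (\<lambda>xs. g (map (\<lambda>i. xs ! 0) [0..<2]))"
    by (rule trl_sub) auto
  ultimately have "(\<lambda>x. (\<lambda>xs. g (map (\<lambda>i. xs ! 0) [0..<2])) ([undefined][0 := x])) \<in> N" by blast
  moreover have "(\<lambda>x. (\<lambda>xs. g (map (\<lambda>i. xs ! 0) [0..<2])) ([undefined][0 := x])) = (\<lambda>x. h x x)"
    by (simp add: g_def upt_rec)
  ultimately show "(\<lambda>x. h x x) \<in> N" by simp
qed

lemma u_closed_props:
  assumes "u_closed M"
  shows "\<T> \<subseteq> M" "DC M"
proof -
  let ?F = "{N. M \<subseteq> N \<and> is_monoid N \<and> is_clone (star N)}"
  have eq: "\<Inter>?F = M" using assms by (simp add: u_closed_def u_closure_def)
  show "\<T> \<subseteq> M"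
  proof -
    have "\<T> \<subseteq> N" if "N \<in> ?F" for N using that clone_T by blast
    then have "\<T> \<subseteq> \<Inter>?F" by blast
    then show ?thesis using eq by simp
  qed
  show "DC M" unfolding DC_def
  proof (intro allI impI)
    fix h assume r: "\<forall>a. h a \<in> M" and c: "\<forall>b. (\<lambda>x. h x b) \<in> M"
    have "(\<lambda>x. h x x) \<in> N" if "N \<in> ?F" for N
      using that clone_DC[of N] r c unfolding DC_def by blast
    then have "(\<lambda>x. h x x) \<in> \<Inter>?F" by blast
    then show "(\<lambda>x. h x x) \<in> M" using eq by simp
  qed
qed

lemma u_closedI:
  assumes "is_monoid M" "\<T> \<subseteq> M" "DC M"
  shows "u_closed M"
proof -
  let ?F = "{N. M \<subseteq> N \<and> is_monoid N \<and> is_clone (star N)}"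
  have "M \<in> ?F" using assms clone_of_DC by blast
  then have "\<Inter>?F = M" by blast
  then show ?thesis by (simp add: u_closed_def u_closure_def)
qed



lemma M_of_monoid: "is_monoid (M_of f)"
  unfolding is_monoid_def M_of_def gen_monoid_def
proof (intro conjI ballI)
  show "id \<in> range (\<lambda>n. f ^^ n) \<union> \<C>" by (metis UnI1 funpow_0 id_apply rangeI eq_id_iff)
next
  fix g1 g2 assume g1: "g1 \<in> range (\<lambda>n. f ^^ n) \<union> \<C>" and g2: "g2 \<in> range (\<lambda>n. f ^^ n) \<union> \<C>"
  show "g1 \<circ> g2 \<in> range (\<lambda>n. f ^^ n) \<union> \<C>"
  proof (cases "g2 \<in> \<C>")
    case True
    then obtain c where "g2 = (\<lambda>_. c)" by (auto simp: in_C_iff)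
    then have "g1 \<circ> g2 = (\<lambda>_. g1 c)" by auto
    then show ?thesis by (simp add: const_in_C)
  next
    case False
    then obtain n where n: "g2 = f ^^ n" using g2 by auto
    show ?thesis
    proof (cases "g1 \<in> \<C>")
      case True
      then obtain c where "g1 = (\<lambda>_. c)" by (auto simp: in_C_iff)
      then have "g1 \<circ> g2 = (\<lambda>_. c)" by auto
      then show ?thesis by (simp add: const_in_C)
    next
      case False
      then obtain m where m: "g1 = f ^^ m" using g1 by auto
      have "g1 \<circ> g2 = f ^^ (m + n)" by (simp add: m n funpow_add)
      then show ?thesis by auto
    qed
  qed
qed

lemma pow_in_M_of: "f ^^ n \<in> M_of f"
  by (simp add: M_of_def gen_monoid_def)

lemma f_in_M_of: "f \<in> M_of f"
  using pow_in_M_of[where n=1] by simp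

lemma C_sub_M_of: "\<C> \<subseteq> M_of f"
  by (simp add: M_of_def)

lemma T_sub_M_of: "\<T> \<subseteq> M_of f"
  using pow_in_M_of[where n=0] C_sub_M_of by (auto simp: T_maps_def)

lemma M_of_elem: "g \<in> M_of f \<Longrightarrow> g \<in> \<C> \<or> (\<exists>n. g = f ^^ n)"
  by (auto simp: M_of_def gen_monoid_def)

lemma pow12:
  assumes "f \<circ> f = f \<or> f \<circ> f \<in> \<C>"
  shows "f ^^ n \<in> {id, f} \<union> \<C>"
proof (induction n)
  case 0 then show ?case by simp
next
  case (Suc n)
  have e: "f ^^ Suc n = f \<circ> f ^^ n" by simp
  have "f ^^ n = id \<or> f ^^ n = f \<or> f ^^ n \<in> \<C>" using Suc by blast
  then consider "f ^^ n = id" | "f ^^ n = f" | c where "f ^^ n = (\<lambda>_. c)"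
    by (auto simp: in_C_iff)
  then show ?case
  proof cases
    case 1 then show ?thesis using e by simp
  next
    case 2
    have "f ^^ Suc n = f \<circ> f" using e 2 by (simp only:)
    then show ?thesis using assms by (metis UnI2 insertI1 insert_commute UnI1)
  next
    case 3 then show ?thesis using e by (auto simp: in_C_iff comp_def)
  qed
qed

lemma M_of12:
  assumes "f \<circ> f = f \<or> f \<circ> f \<in> \<C>"
  shows "M_of f = {id, f} \<union> \<C>"
proof
  show "M_of f \<subseteq> {id, f} \<union> \<C>" using pow12[OF assms] M_of_elem by blast
  show "{id, f} \<union> \<C> \<subseteq> M_of f" using T_sub_M_of f_in_M_of by (auto simp: T_maps_def)
qed

lemma card2_obtain:
  assumes "finite S" "card S \<ge> 2"
  obtains a b where "a \<in> S" "b \<in> S" "a \<noteq> b"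
proof -
  have "\<not> card S \<le> Suc 0" using assms by simp
  then show ?thesis using that card_le_Suc0_iff_eq[OF assms(1)] by blast
qed

lemma rowid:
  fixes h :: "'a::finite \<Rightarrow> 'a \<Rightarrow> 'a"
  assumes good: "f \<circ> f = f \<or> (f \<circ> f \<in> \<C> \<and> card (UNIV :: 'a set) \<ge> 4)"
    and rows: "\<forall>a. h a \<in> {id, f} \<union> \<C>"
    and cols: "\<forall>b. (\<lambda>x. h x b) \<in> {id, f} \<union> \<C>"
    and ha: "h a = id"
    and b0: "(\<lambda>x. h x b0) \<notin> \<C>"
  shows "(\<lambda>x. h x x) = id"
proof -
  have hay: "h a y = y" for y using ha by simp
  show ?thesis
  proof (cases "f \<circ> f = f")
    case True
    have "h x x = x" for x
    proof -
      consider "(\<lambda>y. h y x) = id" | "(\<lambda>y. h y x) = f" | c where "(\<lambda>y. h y x) = (\<lambda>_. c)"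
        using cols by (auto simp: in_C_iff)
      then show ?thesis
      proof cases
        case 1 then show ?thesis by (metis id_apply)
      next
        case 2
        then have "f a = x" using hay by metis
        moreover have "h x x = f x" using 2 by metis
        ultimately show ?thesis using True by (metis comp_apply)
      next
        case 3
        then show ?thesis using hay by metis
      qed
    qed
    then show ?thesis by (simp add: fun_eq_iff)
  next
    case False
    then have sq: "f \<circ> f \<in> \<C>" and c4: "card (UNIV :: 'a set) \<ge> 4" using good by auto
    have "card (UNIV - {a, f a}) \<ge> 2"
    proof -
      have "card {a, f a} \<le> 2" by (simp add: card_insert_le_m1)
      then have "card (UNIV - {a, f a}) = card (UNIV :: 'a set) - card {a, f a}"
        by (simp add: card_Diff_subset)
      then show ?thesis using c4 \<open>card {a, f a} \<le> 2\<close> by linarith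
    qed
    moreover have fin: "finite (UNIV - {a, f a})" by simp
    ultimately obtain s1 s2 where "s1 \<in> UNIV - {a, f a}" "s2 \<in> UNIV - {a, f a}" "s1 \<noteq> s2"
      using card2_obtain by blast
    then have s: "s1 \<notin> {a, f a}" "s2 \<notin> {a, f a}" "s1 \<noteq> s2" by auto
    have colS: "h x s = s" if "s \<notin> {a, f a}" for x s
    proof -
      consider "(\<lambda>y. h y s) = id" | "(\<lambda>y. h y s) = f" | c where "(\<lambda>y. h y s) = (\<lambda>_. c)"
        using cols by (auto simp: in_C_iff)
      then show ?thesis
      proof cases
        case 1 then have "h a s = a" by (metis id_apply)
        then show ?thesis using hay that by simp
      next
        case 2 then have "h a s = f a" by metis
        then show ?thesis using hay that by simp
      next
        case 3 then show ?thesis using hay by metis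
      qed
    qed
    have rowf: "h x = id \<or> h x = f" for x
    proof -
      have "h x \<notin> \<C>"
      proof
        assume "h x \<in> \<C>"
        then obtain c where "h x = (\<lambda>_. c)" by (auto simp: in_C_iff)
        then show False using colS[of s1 x] colS[of s2 x] s by simp
      qed
      then show ?thesis using rows by auto
    qed
    have "\<exists>x1. h x1 = f"
    proof (rule ccontr)
      assume "\<nexists>x1. h x1 = f"
      then have "\<forall>x. h x = id" using rowf by blast
      then have "(\<lambda>x. h x b0) = (\<lambda>_. b0)" by simp
      then show False using b0 const_in_C by metis
    qed
    then obtain x1 where x1: "h x1 = f" by blast
    have "f s1 = s1" "f s2 = s2" using colS[of s1 x1] colS[of s2 x1] s x1 by auto
    moreover obtain c where "f \<circ> f = (\<lambda>_. c)" using sq by (auto simp: in_C_iff)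
    ultimately have "s1 = c" "s2 = c" by (metis comp_apply)+
    then show ?thesis using s by simp
  qed
qed

lemma DC12:
  fixes f :: "'a::finite \<Rightarrow> 'a"
  assumes good: "f \<circ> f = f \<or> (f \<circ> f \<in> \<C> \<and> card (UNIV :: 'a set) \<ge> 4)"
  shows "DC ({id, f} \<union> \<C>)"
  unfolding DC_def
proof (intro allI impI)
  fix h :: "'a \<Rightarrow> 'a \<Rightarrow> 'a"
  assume rows: "\<forall>a. h a \<in> {id, f} \<union> \<C>" and cols: "\<forall>b. (\<lambda>x. h x b) \<in> {id, f} \<union> \<C>"
  show "(\<lambda>x. h x x) \<in> {id, f} \<union> \<C>"
  proof (cases "\<forall>a. h a \<in> \<C>")
    case True
    have "(\<lambda>x. h x x) = (\<lambda>x. h x undefined)"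
    proof
      fix x obtain c where "h x = (\<lambda>_. c)" using True by (auto simp: in_C_iff)
      then show "h x x = h x undefined" by simp
    qed
    then show ?thesis using cols by simp
  next
    case False
    then obtain a0 where a0: "h a0 \<notin> \<C>" by blast
    show ?thesis
    proof (cases "\<forall>b. (\<lambda>x. h x b) \<in> \<C>")
      case True
      have "(\<lambda>x. h x x) = h undefined"
      proof
        fix x obtain c where "(\<lambda>y. h y x) = (\<lambda>_. c)" using True by (auto simp: in_C_iff)
        then show "h x x = h undefined x" by metis
      qed
      then show ?thesis using rows by simp
    next
      case False
      then obtain b0 where b0: "(\<lambda>x. h x b0) \<notin> \<C>" by blast
      show ?thesis
      proof (cases "\<exists>a. h a = id")
        case True
        then obtain a where "h a = id" by blast
        then have "(\<lambda>x. h x x) = id" using rowid[OF good rows cols _ b0] by blast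
        then show ?thesis by simp
      next
        case noid: False
        show ?thesis
        proof (cases "\<exists>b. (\<lambda>x. h x b) = id")
          case True
          then obtain b where b: "(\<lambda>x. h x b) = id" by blast
          define h' where "h' = (\<lambda>x y. h y x)"
          have "(\<lambda>x. h' x x) = id"
            by (rule rowid[OF good, of h' b a0]) (use rows cols b a0 in \<open>auto simp: h'_def\<close>)
          then show ?thesis by (simp add: h'_def)
        next
          case False
          have colb0: "(\<lambda>x. h x b0) = f" using cols b0 False by blast
          have "(\<lambda>x. h x x) = f"
          proof
            fix x
            show "h x x = f x"
            proof (cases "h x \<in> \<C>")
              case True
              then obtain c where "h x = (\<lambda>_. c)" by (auto simp: in_C_iff)
              then have "h x x = h x b0" by simp
              then show ?thesis using colb0 by metis
            next
              case False
              then have "h x = f" using rows noid by blast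
              then show ?thesis by simp
            qed
          qed
          then show ?thesis by simp
        qed
      qed
    qed
  qed
qed



lemma funpow_fix: "f x = x \<Longrightarrow> (f ^^ n) x = x"
  by (induction n) auto

lemma funpow_add_apply: "(f ^^ m) ((f ^^ n) x) = (f ^^ (m + n)) x"
  by (simp add: funpow_add)

lemma funpow_comm: "(f ^^ m) ((f ^^ n) x) = (f ^^ n) ((f ^^ m) x)"
proof -
  have "(f ^^ m) ((f ^^ n) x) = (f ^^ (m + n)) x" by (rule funpow_add_apply)
  also have "\<dots> = (f ^^ (n + m)) x" by (simp only: add.commute)
  also have "\<dots> = (f ^^ n) ((f ^^ m) x)" by (rule funpow_add_apply[symmetric])
  finally show ?thesis .
qed

lemma pow_period:
  assumes "f ^^ p = id"
  shows "f ^^ (p * k + r) = f ^^ r"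
  by (simp add: funpow_add funpow_mult[symmetric] assms)

lemma pow_period0:
  assumes "f ^^ p = id"
  shows "f ^^ (p * k) = id"
  using pow_period[OF assms, of k 0] by simp

lemma pow_inv:
  assumes "f ^^ p = id" "0 < p"
  shows "(f ^^ (p * n - n)) ((f ^^ n) x) = x"
proof -
  have "n \<le> p * n" using assms(2) by simp
  then have e: "p * n - n + n = p * n" by simp
  have "(f ^^ (p * n - n)) ((f ^^ n) x) = (f ^^ (p * n - n + n)) x" by (rule funpow_add_apply)
  also have "\<dots> = x" unfolding e pow_period0[OF assms(1)] by simp
  finally show ?thesis .
qed

lemma pow_inj:
  assumes "f ^^ p = id" "0 < p"
  shows "inj (f ^^ n)"
proof (rule injI)
  fix x y assume "(f ^^ n) x = (f ^^ n) y"
  then have "(f ^^ (p * n - n)) ((f ^^ n) x) = (f ^^ (p * n - n)) ((f ^^ n) y)" by (rule arg_cong)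
  then show "x = y" unfolding pow_inv[OF assms] .
qed

lemma orbit_self: "x \<in> orbit_of f x"
  unfolding orbit_of_def by (metis funpow_0 rangeI)

lemma orbit_pow: "(f ^^ n) x \<in> orbit_of f x"
  unfolding orbit_of_def by auto

lemma orbit_fix:
  assumes "f u = u" shows "orbit_of f u = {u}"
proof -
  have "\<forall>n. (f ^^ n) u = u" using funpow_fix[of f u] assms by blast
  then show ?thesis unfolding orbit_of_def by auto
qed

lemma orbit_same:
  assumes "f ^^ p = id" "0 < p" "y \<in> orbit_of f x"
  shows "orbit_of f y = orbit_of f x"
proof -
  obtain k where y: "y = (f ^^ k) x" using assms(3) unfolding orbit_of_def by auto
  have x: "x = (f ^^ (p * k - k)) y" using pow_inv[OF assms(1,2)] y by metis
  show ?thesis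
  proof
    show "orbit_of f y \<subseteq> orbit_of f x"
      unfolding orbit_of_def y by (auto simp: funpow_add_apply)
    show "orbit_of f x \<subseteq> orbit_of f y"
      unfolding orbit_of_def by (subst x) (auto simp: funpow_add_apply)
  qed
qed

lemma two_out:
  fixes f :: "'a::finite \<Rightarrow> 'a"
  assumes c3: "card (UNIV :: 'a set) \<ge> 3" and p: "prime p" and fp: "f ^^ p = id"
    and good: "card {x. f x = x} \<ge> 2 \<or> card (cycles_of_length f p) \<ge> 2"
  shows "\<exists>y z. y \<noteq> z \<and> y \<notin> orbit_of f x \<and> z \<notin> orbit_of f x"
proof -
  have p0: "0 < p" using prime_gt_0_nat[OF p] .
  from good show ?thesis
  proof
    assume "card {x. f x = x} \<ge> 2"
    then obtain u v where uv: "f u = u" "f v = v" "u \<noteq> v"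
      using card2_obtain[of "{x. f x = x}"] by auto
    obtain w where w: "w \<noteq> u" "w \<noteq> v"
    proof -
      have "card {u, v} \<le> 2" by (simp add: card_insert_le_m1)
      then have "{u, v} \<noteq> UNIV" using c3 by (metis not_less_eq_eq numeral_3_eq_3 numeral_2_eq_2 le_trans)
      then show ?thesis using that by blast
    qed
    show ?thesis
    proof (cases "u \<in> orbit_of f x")
      case True
      then have "orbit_of f x = {u}" using orbit_same[OF fp p0 True] orbit_fix[of f u, OF uv(1)] by simp
      then show ?thesis using w uv by auto
    next
      case False
      show ?thesis
      proof (cases "v \<in> orbit_of f x")
        case True
        then have "orbit_of f x = {v}" using orbit_same[OF fp p0 True] orbit_fix[of f v, OF uv(2)] by simp
        then show ?thesis using w uv by auto
      next
        case False
        then show ?thesis using \<open>u \<notin> orbit_of f x\<close> uv by auto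
      qed
    qed
  next
    assume "card (cycles_of_length f p) \<ge> 2"
    then obtain O1 O2 where O: "O1 \<in> cycles_of_length f p" "O2 \<in> cycles_of_length f p" "O1 \<noteq> O2"
      using card2_obtain[of "cycles_of_length f p"] by auto
    then obtain Oi where Oi: "Oi \<in> cycles_of_length f p" "Oi \<noteq> orbit_of f x" by metis
    then obtain xi where xi: "Oi = orbit_of f xi" "card (orbit_of f xi) = p"
      unfolding cycles_of_length_def by auto
    have disj: "z \<notin> orbit_of f x" if "z \<in> Oi" for z
    proof
      assume "z \<in> orbit_of f x"
      then have "orbit_of f z = orbit_of f x" using orbit_same[OF fp p0] by blast
      moreover have "orbit_of f z = Oi" using orbit_same[OF fp p0] that xi by blast
      ultimately show False using Oi by simp
    qed
    have "card Oi \<ge> 2" using xi p prime_ge_2_nat by auto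
    then obtain y z where "y \<in> Oi" "z \<in> Oi" "y \<noteq> z" using card2_obtain[of Oi] by auto
    then show ?thesis using disj by blast
  qed
qed

lemma DC3:
  fixes f :: "'a::finite \<Rightarrow> 'a"
  assumes c3: "card (UNIV :: 'a set) \<ge> 3" and p: "prime p" and fp: "f ^^ p = id"
    and good: "card {x. f x = x} \<ge> 2 \<or> card (cycles_of_length f p) \<ge> 2"
  shows "DC (M_of f)"
  unfolding DC_def
proof (intro allI impI)
  have p0: "0 < p" using prime_gt_0_nat[OF p] .
  fix h :: "'a \<Rightarrow> 'a \<Rightarrow> 'a"
  assume rows: "\<forall>a. h a \<in> M_of f" and cols: "\<forall>b. (\<lambda>x. h x b) \<in> M_of f"
  show "(\<lambda>x. h x x) \<in> M_of f"
  proof (cases "\<forall>a. h a \<in> \<C>")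
    case True
    have "(\<lambda>x. h x x) = (\<lambda>x. h x undefined)"
    proof
      fix x obtain c where "h x = (\<lambda>_. c)" using True[rule_format, of x] unfolding in_C_iff by blast
      then show "h x x = h x undefined" by simp
    qed
    then show ?thesis using cols by simp
  next
    case False
    then obtain a0 where a0: "h a0 \<notin> \<C>" by blast
    show ?thesis
    proof (cases "\<forall>b. (\<lambda>x. h x b) \<in> \<C>")
      case True
      have "(\<lambda>x. h x x) = h undefined"
      proof
        fix x obtain c where "(\<lambda>y. h y x) = (\<lambda>_. c)" using True[rule_format, of x] unfolding in_C_iff by blast
        then show "h x x = h undefined x" by metis
      qed
      then show ?thesis using rows by simp
    next
      case False
      then obtain b0 where b0: "(\<lambda>x. h x b0) \<notin> \<C>" by blast
      have A: "orbit_of f x = orbit_of f y" if nx: "h x \<notin> \<C>" and ny: "(\<lambda>x. h x y) \<notin> \<C>" for x y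
      proof -
        have hM: "h x \<in> M_of f" using rows by blast
        obtain n where n: "h x = f ^^ n" using M_of_elem[OF hM] nx by blast
        have cM: "(\<lambda>x. h x y) \<in> M_of f" using cols by blast
        obtain m where m: "(\<lambda>x. h x y) = f ^^ m" using M_of_elem[OF cM] ny by blast
        have "h x y = (f ^^ n) y" using n by simp
        then have "h x y \<in> orbit_of f y" using orbit_pow[where f=f and n=n and x=y] by simp
        then have 1: "orbit_of f (h x y) = orbit_of f y" using orbit_same[OF fp p0] by blast
        have "h x y = (f ^^ m) x" using fun_cong[OF m, of x] by simp
        then have "h x y \<in> orbit_of f x" using orbit_pow[where f=f and n=m and x=x] by simp
        then have 2: "orbit_of f (h x y) = orbit_of f x" using orbit_same[OF fp p0] by blast
        show ?thesis using 1 2 by simp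
      qed
      define Ob where "Ob = orbit_of f a0"
      have Ob0: "orbit_of f b0 = Ob" using A[OF a0 b0] Ob_def by simp
      have outr: "h x \<in> \<C>" if "x \<notin> Ob" for x
      proof (rule ccontr)
        assume "h x \<notin> \<C>"
        then have "orbit_of f x = Ob" using A[OF _ b0] Ob0 by simp
        then show False using that orbit_self[where f=f and x=x] by simp
      qed
      have outc: "(\<lambda>x. h x y) \<in> \<C>" if "y \<notin> Ob" for y
      proof (rule ccontr)
        assume "(\<lambda>x. h x y) \<notin> \<C>"
        then have "orbit_of f y = Ob" using A[OF a0] Ob_def by simp
        then show False using that orbit_self[where f=f and x=y] by simp
      qed
      have cM: "(\<lambda>x. h x b0) \<in> M_of f" using cols by blast
      obtain m where m: "(\<lambda>x. h x b0) = f ^^ m" using M_of_elem[OF cM] b0 by blast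
      have uniq: "x = x'" if ox: "x \<notin> Ob" and ox': "x' \<notin> Ob" for x x'
      proof -
        obtain k where k: "h x = (\<lambda>_. k)" using outr[OF ox] by (auto simp: in_C_iff)
        obtain k' where k': "h x' = (\<lambda>_. k')" using outr[OF ox'] by (auto simp: in_C_iff)
        obtain c where c: "(\<lambda>z. h z x') = (\<lambda>_. c)" using outc[OF ox'] by (auto simp: in_C_iff)
        have "k = c" using k fun_cong[OF c, of x] by simp
        moreover have "k' = c" using k' fun_cong[OF c, of x'] by simp
        ultimately have "h x b0 = h x' b0" using k k' by simp
        then have "(f ^^ m) x = (f ^^ m) x'" using fun_cong[OF m, of x] fun_cong[OF m, of x'] by simp
        then show ?thesis using pow_inj[OF fp p0] by (meson injD)
      qed
      obtain y z where "y \<noteq> z" "y \<notin> Ob" "z \<notin> Ob" using two_out[OF c3 p fp good] Ob_def by blast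
      then show ?thesis using uniq by blast
    qed
  qed
qed



abbreviation goodc :: "('a::finite \<Rightarrow> 'a) \<Rightarrow> bool" where
  "goodc f \<equiv> (f \<circ> f = f
                \<or> (f \<circ> f \<in> \<C> \<and> card (UNIV :: 'a set) \<ge> 4)
                \<or> (\<exists>p. prime p \<and> f ^^ p = id \<and>
                      (card {x. f x = x} \<ge> 2 \<or> card (cycles_of_length f p) \<ge> 2)))"

lemma DC_good:
  fixes f :: "'a::finite \<Rightarrow> 'a"
  assumes c3: "card (UNIV :: 'a set) \<ge> 3" and g: "goodc f"
  shows "DC (M_of f)"
proof -
  from g consider "f \<circ> f = f \<or> (f \<circ> f \<in> \<C> \<and> card (UNIV :: 'a set) \<ge> 4)"
    | p where "prime p" "f ^^ p = id" "card {x. f x = x} \<ge> 2 \<or> card (cycles_of_length f p) \<ge> 2"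
    by blast
  then show ?thesis
  proof cases
    case 1
    then have "M_of f = {id, f} \<union> \<C>" using M_of12 by blast
    then show ?thesis using DC12[OF 1] by simp
  next
    case 2
    then show ?thesis using DC3[OF c3] by blast
  qed
qed

lemma u_closed_good:
  fixes f :: "'a::finite \<Rightarrow> 'a"
  assumes c3: "card (UNIV :: 'a set) \<ge> 3" and g: "goodc f"
  shows "u_closed (M_of f)"
  using u_closedI[OF M_of_monoid T_sub_M_of DC_good[OF c3 g]] .

lemma pow_in_monoid_sub:
  assumes "is_monoid N" "\<T> \<subseteq> N" "f \<in> N"
  shows "M_of f \<subseteq> N"
proof
  fix g assume "g \<in> M_of f"
  then consider "g \<in> \<C>" | n where "g = f ^^ n" using M_of_elem by blast
  then show "g \<in> N"
  proof cases
    case 1 then show ?thesis using assms(2) by (auto simp: T_maps_def)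
  next
    case 2 then show ?thesis using monoid_pow[OF assms(1,3)] by simp
  qed
qed

lemma Cmin_good:
  fixes f :: "'a::finite \<Rightarrow> 'a"
  assumes fT: "f \<notin> \<T>" and g: "goodc f"
    and N: "is_monoid N" "\<T> \<subseteq> N" "N \<subseteq> M_of f" and gN: "g \<in> N" "g \<notin> \<T>"
  shows "M_of f \<subseteq> N"
proof -
  have "f \<in> N"
  proof -
    from g consider "f \<circ> f = f \<or> f \<circ> f \<in> \<C>"
      | p where "prime p" "f ^^ p = id"
      by blast
    then show ?thesis
    proof cases
      case 1
      then have "M_of f = {id, f} \<union> \<C>" using M_of12 by blast
      then have "g = f" using gN N(3) by (auto simp: T_maps_def)
      then show ?thesis using gN by simp
    next
      case 2
      have gM: "g \<in> M_of f" using gN N(3) by blast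
      obtain k where k: "g = f ^^ k" using M_of_elem[OF gM] gN(2) by (auto simp: T_maps_def)
      have ndvd: "\<not> p dvd k"
      proof
        assume "p dvd k"
        then obtain j where "k = p * j" by blast
        then have "g = id" using k pow_period0[OF 2(2)] by simp
        then show False using gN(2) by (simp add: T_maps_def)
      qed
      then have k0: "k \<noteq> 0" by (metis dvd_0_right)
      have "coprime p k" using prime_imp_coprime[OF 2(1) ndvd] .
      then have gcd1: "gcd k p = 1" by (simp add: coprime_commute coprime_iff_gcd_eq_1)
      obtain x y where xy: "k * x = p * y + gcd k p" using bezout_nat[OF k0] by blast
      have "g ^^ x = f ^^ (k * x)" using k by (simp add: funpow_mult)
      also have "\<dots> = f ^^ (p * y + 1)" using xy gcd1 by simp
      also have "\<dots> = f" using pow_period[OF 2(2), of y 1] by simp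
      finally have "g ^^ x = f" .
      then show ?thesis using monoid_pow[OF N(1) gN(1), of x] by simp
    qed
  qed
  then show ?thesis using pow_in_monoid_sub[OF N(1,2)] by blast
qed

lemma minimal_good:
  fixes f :: "'a::finite \<Rightarrow> 'a"
  assumes c3: "card (UNIV :: 'a set) \<ge> 3" and fT: "f \<notin> \<T>" and g: "goodc f"
  shows "minimal_u_closed (M_of f)" "C_minimal (M_of f)"
proof -
  have TM: "\<T> \<subset> M_of f" using T_sub_M_of f_in_M_of fT by blast
  have key: "N = \<T>" if mN: "is_monoid N" and TN: "\<T> \<subseteq> N" and NM: "N \<subset> M_of f" for N
  proof (rule ccontr)
    assume "N \<noteq> \<T>"
    then obtain h where "h \<in> N" "h \<notin> \<T>" using TN by blast
    then have "M_of f \<subseteq> N" using Cmin_good[OF fT g mN TN] NM by blast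
    then show False using NM by blast
  qed
  show "minimal_u_closed (M_of f)"
    unfolding minimal_u_closed_def
    using M_of_monoid u_closed_good[OF c3 g] TM key u_closed_props(1) by blast
  show "C_minimal (M_of f)"
    unfolding C_minimal_def
    using M_of_monoid TM key by blast
qed



lemma pow_repeat:
  fixes s :: "'a::finite \<Rightarrow> 'a"
  obtains i j where "i < j" "s ^^ i = s ^^ j"
proof -
  have "finite (range (\<lambda>n::nat. s ^^ n))" by simp
  then have "\<not> inj (\<lambda>n::nat. s ^^ n)" using finite_imageD infinite_UNIV_nat by blast
  then obtain i j :: nat where ij: "i \<noteq> j" "s ^^ i = s ^^ j" unfolding inj_def by blast
  show ?thesis
  proof (cases "i < j")
    case True then show ?thesis using that ij by blast
  next
    case False then have "j < i" using ij by simp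
    then show ?thesis using that ij by metis
  qed
qed

lemma idem_power:
  fixes s :: "'a::finite \<Rightarrow> 'a"
  obtains m where "m \<ge> 1" "s ^^ m \<circ> s ^^ m = s ^^ m"
proof -
  obtain i j where ij: "i < j" "s ^^ i = s ^^ j" by (rule pow_repeat)
  define d where "d = j - i"
  have d0: "d \<ge> 1" using ij by (simp add: d_def)
  have step: "s ^^ (n + d) = s ^^ n" if "i \<le> n" for n
  proof -
    have "s ^^ (n + d) = s ^^ (n - i) \<circ> s ^^ j"
      using that ij by (simp add: d_def funpow_add[symmetric])
    also have "\<dots> = s ^^ (n - i) \<circ> s ^^ i" using ij by simp
    also have "\<dots> = s ^^ n" using that by (simp add: funpow_add[symmetric])
    finally show ?thesis .
  qed
  have per: "s ^^ (n + d * t) = s ^^ n" if "i \<le> n" for n t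
  proof (induction t)
    case 0 then show ?case by simp
  next
    case (Suc t)
    have "s ^^ (n + d * Suc t) = s ^^ ((n + d * t) + d)" by (simp add: algebra_simps)
    also have "\<dots> = s ^^ (n + d * t)" using step[of "n + d * t"] that by simp
    finally show ?case using Suc by simp
  qed
  define m where "m = d * (i + 1)"
  have m1: "m \<ge> i + 1" unfolding m_def using d0 mult_le_mono1[of 1 d "i+1"] by simp
  have "s ^^ m \<circ> s ^^ m = s ^^ (m + d * (i + 1))" by (simp add: m_def funpow_add)
  also have "\<dots> = s ^^ m" using per[of m "i + 1"] m1 by simp
  finally have "s ^^ m \<circ> s ^^ m = s ^^ m" .
  moreover have "m \<ge> 1" using m1 by simp
  ultimately show ?thesis using that by blast
qed

lemma pow_not_inj:
  fixes s :: "'a \<Rightarrow> 'a"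
  assumes "\<not> inj s" "k \<ge> 1"
  shows "\<not> inj (s ^^ k)"
proof
  assume a: "inj (s ^^ k)"
  obtain k' where k: "k = Suc k'" using assms(2) by (cases k) auto
  have "s ^^ k = s ^^ k' \<circ> s" using k funpow_Suc_right by simp
  then have "inj s" using a inj_on_imageI2 by metis
  then show False using assms(1) by simp
qed

lemma comp_const_right: "g \<in> \<C> \<Longrightarrow> f \<circ> g \<in> \<C>"
  by (auto simp: in_C_iff comp_def)

lemma NI_power:
  fixes s :: "'a::finite \<Rightarrow> 'a"
  assumes ni: "\<not> inj s" and sC: "s \<notin> \<C>"
  shows "\<exists>k. s ^^ k \<notin> \<T> \<and> \<not> inj (s ^^ k) \<and> (s ^^ k \<circ> s ^^ k = s ^^ k \<or> s ^^ k \<circ> s ^^ k \<in> \<C>)"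
proof -
  have notid: "s ^^ k \<noteq> id" if "k \<ge> 1" for k
    using pow_not_inj[OF ni that] by auto
  obtain m where m: "m \<ge> 1" "s ^^ m \<circ> s ^^ m = s ^^ m" by (rule idem_power)
  show ?thesis
  proof (cases "s ^^ m \<in> \<C>")
    case False
    then show ?thesis using m notid pow_not_inj[OF ni] by (auto simp: T_maps_def)
  next
    case True
    define J where "J = {n. s ^^ n \<notin> \<C>}"
    have big: "s ^^ n \<in> \<C>" if "n \<ge> m" for n
    proof -
      have "s ^^ n = s ^^ (n - m) \<circ> s ^^ m" using that by (simp add: funpow_add[symmetric])
      then show ?thesis using comp_const_right[OF True] by simp
    qed
    have J1: "1 \<in> J" using sC by (simp add: J_def)
    have Jfin: "finite J"
    proof -
      have "J \<subseteq> {..<m}"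
      proof
        fix n assume "n \<in> J"
        then have "\<not> m \<le> n" using big by (auto simp: J_def)
        then show "n \<in> {..<m}" by simp
      qed
      then show ?thesis using finite_subset by blast
    qed
    define j where "j = Max J"
    have jJ: "j \<in> J" using Jfin J1 j_def Max_in by blast
    have j1: "j \<ge> 1" using Jfin J1 j_def Max_ge by blast
    have "j + j \<notin> J"
    proof
      assume "j + j \<in> J"
      then have "j + j \<le> j" using Max_ge[OF Jfin] j_def by blast
      then show False using j1 by simp
    qed
    then have sq: "s ^^ j \<circ> s ^^ j \<in> \<C>" by (simp add: J_def funpow_add[symmetric])
    have "s ^^ j \<notin> \<C>" using jJ by (simp add: J_def)
    then show ?thesis using sq notid[OF j1] pow_not_inj[OF ni j1] by (auto simp: T_maps_def)
  qed
qed

lemma perm_power: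
  fixes g :: "'a::finite \<Rightarrow> 'a"
  assumes ig: "inj g" and gid: "g \<noteq> id"
  shows "\<exists>k q. prime q \<and> (g ^^ k) ^^ q = id \<and> g ^^ k \<noteq> id"
proof -
  have injp: "inj (g ^^ n)" for n using ig by (simp add: inj_fn)
  obtain i j where ij: "i < j" "g ^^ i = g ^^ j" by (rule pow_repeat)
  have "g ^^ (j - i) = id"
  proof
    fix y
    have "surj (g ^^ i)" using finite_UNIV_inj_surj[OF _ injp] by simp
    then obtain x where x: "y = (g ^^ i) x" by (metis surj_def)
    have "(g ^^ (j - i)) y = (g ^^ j) x" using x ij(1) by (simp add: funpow_add_apply)
    also have "\<dots> = y" using x ij(2) by simp
    finally show "(g ^^ (j - i)) y = id y" by simp
  qed
  then have ex: "\<exists>n. n > 0 \<and> g ^^ n = id" using ij(1) by (metis zero_less_diff)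
  define n0 where "n0 = (LEAST n. n > 0 \<and> g ^^ n = id)"
  have n0: "n0 > 0" "g ^^ n0 = id" using LeastI_ex[OF ex] by (simp_all add: n0_def)
  have lt: "g ^^ n \<noteq> id" if "0 < n" "n < n0" for n
    using not_less_Least[of n "\<lambda>n. n > 0 \<and> g ^^ n = id"] that by (simp add: n0_def)
  have "n0 \<noteq> 1" using n0 gid by auto
  then obtain q where q: "prime q" "q dvd n0" using prime_factor_nat by blast
  define k where "k = n0 div q"
  have kq: "k * q = n0" using q by (simp add: k_def)
  have q2: "q \<ge> 2" using q prime_ge_2_nat by blast
  have k0: "0 < k" using kq n0 by (metis gr0I mult_0)
  have kn: "k < n0" using kq k0 q2 by (metis less_le_trans mult_less_cancel1 nat_mult_1_right one_less_numeral_iff semiring_norm(76) numeral_le_iff less_2_cases_iff  not_less)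
  have "(g ^^ k) ^^ q = id" using kq n0 by (simp add: funpow_mult)
  moreover have "g ^^ k \<noteq> id" using lt[OF k0 kn] .
  ultimately show ?thesis using q by blast
qed



lemma wit_alpha:
  fixes g :: "'a::finite \<Rightarrow> 'a"
  assumes c3: "card (UNIV :: 'a set) = 3" and gT: "g \<notin> \<T>" and sq: "g \<circ> g \<in> \<C>"
    and mon: "is_monoid M" and TM: "\<T> \<subseteq> M" and dc: "DC M" and gM: "g \<in> M"
  shows "\<exists>e\<in>M. e \<notin> \<T> \<and> e \<circ> e = e"
proof -
  obtain z where "g \<circ> g = (\<lambda>_. z)" using sq by (auto simp: in_C_iff)
  then have gg: "g (g x) = z" for x by (metis comp_apply)
  have gz: "g z = z" using gg[of "g z"] gg[of z] by simp
  have "\<exists>u. g u \<noteq> z"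
  proof (rule ccontr)
    assume "\<not> (\<exists>u. g u \<noteq> z)"
    then have "g = (\<lambda>_. z)" by auto
    then show False using gT const_in_C[of z] by (simp add: T_maps_def)
  qed
  then obtain u where u: "g u \<noteq> z" by blast
  define w where "w = g u"
  have wz: "w \<noteq> z" using u w_def by simp
  have gw: "g w = z" using gg w_def by simp
  have uw: "u \<noteq> w" using gw u w_def by auto
  have uz: "u \<noteq> z" using gz u by auto
  have UN: "UNIV = {z, w, u}"
  proof -
    have "card {z, w, u} = 3" using wz uw uz by auto
    then show ?thesis using c3 by (metis card_subset_eq finite subset_UNIV)
  qed
  have cases3: "P x" if "P z" "P w" "P u" for P x
  proof -
    have "x \<in> {z, w, u}" using UN by simp
    then show ?thesis using that by auto
  qed
  define h where "h = (\<lambda>x y. if x = z then z else if x = w then g y else y)"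
  have idM: "id \<in> M" using TM by (auto simp: T_maps_def)
  have cM: "(\<lambda>_. c) \<in> M" for c using TM const_in_C[of c] by (auto simp: T_maps_def)
  have rows: "\<forall>a. h a \<in> M"
  proof
    fix a
    show "h a \<in> M"
    proof (cases "a = z")
      case True then show ?thesis using cM by (simp add: h_def)
    next
      case False
      show ?thesis
      proof (cases "a = w")
        case True
        then have "h a = g" using False wz by (auto simp: h_def fun_eq_iff)
        then show ?thesis using gM by simp
      next
        case False
        then have "h a = id" using \<open>a \<noteq> z\<close> by (auto simp: h_def fun_eq_iff)
        then show ?thesis using idM by simp
      qed
    qed
  qed
  have cols: "\<forall>b. (\<lambda>x. h x b) \<in> M"
  proof
    fix b
    show "(\<lambda>x. h x b) \<in> M"
    proof (rule cases3[of "\<lambda>b. (\<lambda>x. h x b) \<in> M" b])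
      have "(\<lambda>x. h x z) = (\<lambda>_. z)" unfolding h_def using gz by auto
      then show "(\<lambda>x. h x z) \<in> M" using cM by simp
    next
      have "(\<lambda>x. h x w) = g"
      proof
        fix x show "h x w = g x"
          by (rule cases3[of "\<lambda>x. h x w = g x" x]) (use gz gw wz uw uz w_def in \<open>auto simp: h_def\<close>)
      qed
      then show "(\<lambda>x. h x w) \<in> M" using gM by simp
    next
      have "(\<lambda>x. h x u) = id"
      proof
        fix x show "h x u = id x"
          by (rule cases3[of "\<lambda>x. h x u = id x" x]) (use gz gw wz uw uz w_def in \<open>auto simp: h_def\<close>)
      qed
      then show "(\<lambda>x. h x u) \<in> M" using idM by simp
    qed
  qed
  define e where "e = (\<lambda>x. h x x)"
  have eM: "e \<in> M" using dc rows cols unfolding DC_def e_def by blast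
  have ez: "e z = z" and ew: "e w = z" and eu: "e u = u"
    using gw wz uw uz by (auto simp: e_def h_def)
  have "e \<noteq> id" using ew wz by (metis id_apply)
  moreover have "e \<notin> \<C>"
  proof
    assume "e \<in> \<C>"
    then obtain c where "e = (\<lambda>_. c)" by (auto simp: in_C_iff)
    then show False using ez eu uz by metis
  qed
  moreover have "e \<circ> e = e"
  proof
    fix x show "(e \<circ> e) x = e x"
      by (rule cases3[of "\<lambda>x. (e \<circ> e) x = e x" x]) (use ez ew eu in auto)
  qed
  ultimately show ?thesis using eM by (auto simp: T_maps_def)
qed



lemma fixdvd:
  assumes p: "prime p" and gp: "g ^^ p = id" and gx: "g x \<noteq> x" and fx: "(g ^^ i) x = x"
  shows "p dvd i"
proof (rule ccontr)
  assume nd: "\<not> p dvd i"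
  then have i0: "i \<noteq> 0" by (metis dvd_0_right)
  have "coprime p i" using prime_imp_coprime[OF p nd] .
  then have gcd1: "gcd i p = 1" by (simp add: coprime_commute coprime_iff_gcd_eq_1)
  obtain a b where ab: "i * a = p * b + gcd i p" using bezout_nat[OF i0] by blast
  have "((g ^^ i) ^^ a) x = x" using funpow_fix[of "g ^^ i" x a] fx by simp
  moreover have "(g ^^ i) ^^ a = g" using ab gcd1 pow_period[OF gp, of b 1] by (simp add: funpow_mult)
  ultimately show False using gx by simp
qed

lemma pow_mod:
  assumes "g ^^ p = id"
  shows "(g ^^ i) x = (g ^^ (i mod p)) x"
  using pow_period[OF assms, of "i div p" "i mod p"] by simp

lemma idx_mod:
  assumes p: "prime p" and gp: "g ^^ p = id" and gx: "g x \<noteq> x" and eq: "(g ^^ i) x = (g ^^ j) x"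
  shows "i mod p = j mod p"
proof -
  have p0: "0 < p" using prime_gt_0_nat[OF p] .
  have main: "i mod p = j mod p" if ij: "i \<le> j" and eq: "(g ^^ i) x = (g ^^ j) x" for i j
  proof -
    define y where "y = (g ^^ i) x"
    have "(g ^^ (j - i)) y = (g ^^ (j - i + i)) x" unfolding y_def by (rule funpow_add_apply)
    also have "\<dots> = (g ^^ j) x" using ij by simp
    finally have y1: "(g ^^ (j - i)) y = y" using eq y_def by simp
    have x: "x = (g ^^ (p * i - i)) y" using pow_inv[OF gp p0] y_def by simp
    have "(g ^^ (j - i)) x = x"
      using x y1 funpow_comm[where f=g and m="j - i" and n="p * i - i" and x=y] by simp
    then have "p dvd (j - i)" using fixdvd[OF p gp gx] by blast
    then show ?thesis using ij by (metis mod_eq_dvd_iff_nat)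
  qed
  show ?thesis
  proof (cases "i \<le> j")
    case True then show ?thesis using main eq by blast
  next
    case False then show ?thesis using main[of j i] eq by simp
  qed
qed

lemma orbit_card:
  assumes p: "prime p" and gp: "g ^^ p = id" and gx: "g x \<noteq> x"
  shows "card (orbit_of g x) = p"
proof -
  have "orbit_of g x = (\<lambda>i. (g ^^ i) x) ` {0..<p}"
  proof
    show "orbit_of g x \<subseteq> (\<lambda>i. (g ^^ i) x) ` {0..<p}"
    proof
      fix y assume "y \<in> orbit_of g x"
      then obtain n where "y = (g ^^ n) x" unfolding orbit_of_def by auto
      then have "y = (g ^^ (n mod p)) x" using pow_mod[OF gp] by simp
      moreover have "n mod p \<in> {0..<p}" using prime_gt_0_nat[OF p] by simp
      ultimately show "y \<in> (\<lambda>i. (g ^^ i) x) ` {0..<p}" by blast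
    qed
    show "(\<lambda>i. (g ^^ i) x) ` {0..<p} \<subseteq> orbit_of g x" unfolding orbit_of_def by auto
  qed
  moreover have "inj_on (\<lambda>i. (g ^^ i) x) {0..<p}"
  proof (rule inj_onI)
    fix i j assume "i \<in> {0..<p}" "j \<in> {0..<p}" "(g ^^ i) x = (g ^^ j) x"
    then show "i = j" using idx_mod[OF p gp gx, of i j] by simp
  qed
  ultimately show ?thesis by (simp add: card_image)
qed

lemma sq_pm1: "p \<ge> 2 \<Longrightarrow> ((p - 1) * (p - 1)) mod p = (1::nat)"
proof -
  assume "p \<ge> 2"
  then obtain q where q: "p = Suc (Suc q)" by (metis add_2_eq_Suc le_Suc_ex)
  have e: "(p - 1) * (p - 1) = p * q + 1" using q by (simp add: algebra_simps)
  have "((p - 1) * (p - 1)) mod p = (p * q + 1) mod p" by (simp only: e)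
  also have "\<dots> = 1 mod p" by (metis add.commute mod_mult_self2)
  also have "\<dots> = 1" using q by simp
  finally show ?thesis .
qed



lemma wit_perm:
  fixes g :: "'a::finite \<Rightarrow> 'a"
  assumes c3: "card (UNIV :: 'a set) \<ge> 3" and p: "prime p" and gp: "g ^^ p = id" and gid: "g \<noteq> id"
    and nf: "\<not> card {x. g x = x} \<ge> 2" and nc: "\<not> card (cycles_of_length g p) \<ge> 2"
    and mon: "is_monoid M" and TM: "\<T> \<subseteq> M" and dc: "DC M" and gM: "g \<in> M"
  shows "\<exists>s\<in>M. \<not> inj s \<and> s \<notin> \<C>"
proof -
  have p0: "0 < p" using prime_gt_0_nat[OF p] .
  have p2: "p \<ge> 2" using prime_ge_2_nat[OF p] .
  have cM: "(\<lambda>_. c) \<in> M" for c using TM const_in_C[of c] by (auto simp: T_maps_def)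
  have idM: "id \<in> M" using TM by (auto simp: T_maps_def)
  obtain x0 where gx0: "g x0 \<noteq> x0" using gid by (metis eq_id_iff)
  define Ob where "Ob = orbit_of g x0"
  have x0Ob: "x0 \<in> Ob" using orbit_self[where f=g and x=x0] Ob_def by simp
  have cardOb: "card Ob = p" using orbit_card[OF p gp gx0] Ob_def by simp
  have out_fix: "g y = y" if "y \<notin> Ob" for y
  proof (rule ccontr)
    assume gy: "g y \<noteq> y"
    have "orbit_of g y \<in> cycles_of_length g p" using orbit_card[OF p gp gy]
      unfolding cycles_of_length_def by blast
    moreover have "Ob \<in> cycles_of_length g p" using cardOb Ob_def
      unfolding cycles_of_length_def by blast
    moreover have "orbit_of g y \<noteq> Ob" using that orbit_self[where f=g and x=y] by auto
    ultimately have "card (cycles_of_length g p) \<ge> 2"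
      using card_le_Suc0_iff_eq[of "cycles_of_length g p"] by fastforce
    then show False using nc by simp
  qed
  have out_uniq: "y = z" if yO: "y \<notin> Ob" and zO: "z \<notin> Ob" for y z
  proof -
    have c1: "card {x. g x = x} \<le> Suc 0" using nf by simp
    have fin: "finite {x. g x = x}" by simp
    have all: "\<forall>a1\<in>{x. g x = x}. \<forall>a2\<in>{x. g x = x}. a1 = a2"
      using card_le_Suc0_iff_eq[OF fin] c1 by blast
    have "y \<in> {x. g x = x}" "z \<in> {x. g x = x}" using out_fix[OF yO] out_fix[OF zO] by auto
    then show ?thesis using all by blast
  qed
  define \<iota> where "\<iota> = (\<lambda>y. SOME i. (g ^^ i) x0 = y)"
  have iota: "(g ^^ (\<iota> y)) x0 = y" if "y \<in> Ob" for y
  proof -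
    have "\<exists>i. (g ^^ i) x0 = y" using that unfolding Ob_def orbit_of_def by auto
    then show ?thesis unfolding \<iota>_def by (rule someI_ex)
  qed
  have gpowM: "g ^^ n \<in> M" for n using monoid_pow[OF mon gM] .
  define m where "m = (\<lambda>k y. if y \<in> Ob then (g ^^ (k * \<iota> y)) x0 else y)"
  have mM: "m k \<in> M" if "k \<ge> 1" for k
    using that
  proof (induction k rule: dec_induct)
    case base
    have "m 1 = id" using iota by (auto simp: m_def fun_eq_iff)
    then show ?case using idM by metis
  next
    case (step k)
    define h where "h = (\<lambda>x y. if y \<in> Ob then (g ^^ (k * \<iota> y)) x else y)"
    have rows: "\<forall>a. h a \<in> M"
    proof
      fix a
      show "h a \<in> M"
      proof (cases "a \<in> Ob")
        case True
        have "h a = g ^^ (\<iota> a) \<circ> m k"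
        proof
          fix y
          show "h a y = (g ^^ (\<iota> a) \<circ> m k) y"
          proof (cases "y \<in> Ob")
            case True
            have "h a y = (g ^^ (k * \<iota> y)) ((g ^^ (\<iota> a)) x0)" using iota[OF \<open>a \<in> Ob\<close>] True
              by (simp add: h_def)
            also have "\<dots> = (g ^^ (\<iota> a)) ((g ^^ (k * \<iota> y)) x0)" by (rule funpow_comm)
            finally show ?thesis using True by (simp add: m_def)
          next
            case False
            then show ?thesis using funpow_fix[of g y "\<iota> a"] out_fix[OF False] by (simp add: h_def m_def)
          qed
        qed
        then show ?thesis using monoid_comp[OF mon gpowM step.IH] by simp
      next
        case False
        have "h a = (\<lambda>_. a)"
        proof
          fix y show "h a y = a"
          proof (cases "y \<in> Ob")
            case True then show ?thesis using funpow_fix[of g a] out_fix[OF False] by (simp add: h_def)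
          next
            case False then show ?thesis using out_uniq \<open>a \<notin> Ob\<close> by (simp add: h_def)
          qed
        qed
        then show ?thesis using cM by simp
      qed
    qed
    have cols: "\<forall>b. (\<lambda>x. h x b) \<in> M"
    proof
      fix b
      show "(\<lambda>x. h x b) \<in> M"
      proof (cases "b \<in> Ob")
        case True
        then have "(\<lambda>x. h x b) = g ^^ (k * \<iota> b)" by (simp add: h_def fun_eq_iff)
        then show ?thesis using gpowM by simp
      next
        case False
        then have "(\<lambda>x. h x b) = (\<lambda>_. b)" by (simp add: h_def)
        then show ?thesis using cM by simp
      qed
    qed
    have "(\<lambda>x. h x x) \<in> M" using dc rows cols unfolding DC_def by blast
    moreover have "(\<lambda>x. h x x) = m (Suc k)"
    proof
      fix x
      show "h x x = m (Suc k) x"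
      proof (cases "x \<in> Ob")
        case True
        have "h x x = (g ^^ (k * \<iota> x)) ((g ^^ (\<iota> x)) x0)" using iota[OF True] True by (simp add: h_def)
        also have "\<dots> = (g ^^ (Suc k * \<iota> x)) x0" by (simp add: funpow_add_apply add.commute)
        finally show ?thesis using True by (simp add: m_def)
      next
        case False then show ?thesis by (simp add: h_def m_def)
      qed
    qed
    ultimately show ?case by simp
  qed
  show ?thesis
  proof (cases "Ob = UNIV")
    case False
    then obtain w where w: "w \<notin> Ob" by blast
    have sM: "m p \<in> M" using mM p2 by simp
    have s1: "m p y = x0" if "y \<in> Ob" for y
      using that pow_period0[OF gp, of "\<iota> y"] by (simp add: m_def)
    have gx0Ob: "g x0 \<in> Ob" using orbit_pow[where f=g and n=1 and x=x0] Ob_def by simp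
    have "\<not> inj (m p)"
    proof
      assume "inj (m p)"
      then have "x0 = g x0" using s1[OF x0Ob] s1[OF gx0Ob] by (metis injD)
      then show False using gx0 by simp
    qed
    moreover have "m p \<notin> \<C>"
    proof
      assume "m p \<in> \<C>"
      then obtain c where c: "m p = (\<lambda>_. c)" by (auto simp: in_C_iff)
      have "m p w = w" using w by (simp add: m_def)
      then show False using c s1[OF x0Ob] w x0Ob by metis
    qed
    ultimately show ?thesis using sM by blast
  next
    case True
    then have allOb: "y \<in> Ob" for y by simp
    have mk: "m k y = (g ^^ (k * \<iota> y)) x0" for k y using allOb by (simp add: m_def)
    define h where "h = (\<lambda>x y. (g ^^ (\<iota> x * \<iota> y)) x0)"
    have inM: "(\<lambda>y. (g ^^ (n * \<iota> y)) x0) \<in> M" for n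
    proof (cases "n = 0")
      case True then show ?thesis using cM by simp
    next
      case False
      then have "(\<lambda>y. (g ^^ (n * \<iota> y)) x0) = m n" using mk by (simp add: fun_eq_iff)
      then show ?thesis using mM[of n] False by simp
    qed
    have rows: "\<forall>a. h a \<in> M" using inM by (simp add: h_def)
    have cols: "\<forall>b. (\<lambda>x. h x b) \<in> M" using inM by (simp add: h_def mult.commute)
    define s where "s = (\<lambda>x. h x x)"
    have sM: "s \<in> M" using dc rows cols unfolding DC_def s_def by blast
    have sval: "s y = (g ^^ (((\<iota> y mod p) * (\<iota> y mod p)) mod p)) x0" for y
      unfolding s_def h_def using pow_mod[OF gp, of "\<iota> y * \<iota> y" x0] by (simp add: mod_mult_eq)
    have imod: "\<iota> y mod p = i mod p" if "(g ^^ i) x0 = y" for y i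
      using idx_mod[OF p gp gx0, of "\<iota> y" i] iota[OF allOb[of y]] that by simp
    have s0: "s x0 = x0"
    proof -
      have "\<iota> x0 mod p = 0" using imod[of 0 x0] by simp
      then show ?thesis using sval[of x0] by simp
    qed
    have s1: "s (g x0) = g x0"
    proof -
      have "\<iota> (g x0) mod p = 1" using imod[of 1 "g x0"] p2 by simp
      then show ?thesis using sval[of "g x0"] p2 by simp
    qed
    define y1 where "y1 = (g ^^ (p - 1)) x0"
    have sy1: "s y1 = g x0"
    proof -
      have "\<iota> y1 mod p = p - 1" using imod[of "p - 1" y1] p2 by (simp add: y1_def)
      then show ?thesis using sval[of y1] sq_pm1[OF p2] by simp
    qed
    have "p \<noteq> 2"
    proof
      assume "p = 2"
      then have "card (UNIV :: 'a set) = 2" using cardOb True by simp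
      then show False using c3 by simp
    qed
    then have ne: "g x0 \<noteq> y1"
    proof -
      assume "p \<noteq> 2"
      show "g x0 \<noteq> y1"
      proof
        assume "g x0 = y1"
        then have "(g ^^ 1) x0 = (g ^^ (p - 1)) x0" by (simp add: y1_def)
        then have "1 mod p = (p - 1) mod p" using idx_mod[OF p gp gx0] by blast
        then show False using p2 \<open>p \<noteq> 2\<close> by simp
      qed
    qed
    have "\<not> inj s"
    proof
      assume "inj s"
      then show False using s1 sy1 ne by (metis injD)
    qed
    moreover have "s \<notin> \<C>"
    proof
      assume "s \<in> \<C>"
      then obtain c where c: "s = (\<lambda>_. c)" by (auto simp: in_C_iff)
      then show False using s0 s1 gx0 by metis
    qed
    ultimately show ?thesis using sM by blast
  qed
qed



lemma K_lemma:
  fixes f :: "'a::finite \<Rightarrow> 'a"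
  assumes mu: "minimal_u_closed M" and c3: "card (UNIV :: 'a set) \<ge> 3"
    and fM: "f \<in> M" and fT: "f \<notin> \<T>" and g: "goodc f"
  shows "M = M_of f"
proof -
  have mon: "is_monoid M" and TM: "\<T> \<subseteq> M"
    and mini: "\<forall>N. is_monoid N \<and> u_closed N \<and> N \<subset> M \<longrightarrow> N = \<T>"
    using mu unfolding minimal_u_closed_def by auto
  have sub: "M_of f \<subseteq> M" using pow_in_monoid_sub[OF mon TM fM] .
  have ne: "M_of f \<noteq> \<T>" using f_in_M_of fT by blast
  have "\<not> M_of f \<subset> M" using mini M_of_monoid u_closed_good[OF c3 g] ne by blast
  then show ?thesis using sub by blast
qed

lemma idem_not_inj:
  assumes "e \<circ> e = e" "e \<noteq> id"
  shows "\<not> inj e"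
proof
  assume i: "inj e"
  have "e x = x" for x using assms(1) i by (metis comp_apply injD)
  then show False using assms(2) by auto
qed

lemma NI_lemma:
  fixes s :: "'a::finite \<Rightarrow> 'a"
  assumes mu: "minimal_u_closed M" and c3: "card (UNIV :: 'a set) \<ge> 3"
    and sM: "s \<in> M" and ni: "\<not> inj s" and sC: "s \<notin> \<C>"
  shows "\<exists>e. e \<notin> \<T> \<and> \<not> inj e \<and> M = M_of e \<and>
           (e \<circ> e = e \<or> (e \<circ> e \<in> \<C> \<and> card (UNIV :: 'a set) \<ge> 4))"
proof -
  have mon: "is_monoid M" and TM: "\<T> \<subseteq> M" and uc: "u_closed M"
    using mu unfolding minimal_u_closed_def by auto
  have dc: "DC M" using u_closed_props(2)[OF uc] .
  obtain k where k: "s ^^ k \<notin> \<T>" "\<not> inj (s ^^ k)"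
      "s ^^ k \<circ> s ^^ k = s ^^ k \<or> s ^^ k \<circ> s ^^ k \<in> \<C>"
    using NI_power[OF ni sC] by blast
  define e0 where "e0 = s ^^ k"
  have e0M: "e0 \<in> M" using monoid_pow[OF mon sM] e0_def by simp
  show ?thesis
  proof (cases "e0 \<circ> e0 = e0 \<or> (e0 \<circ> e0 \<in> \<C> \<and> card (UNIV :: 'a set) \<ge> 4)")
    case True
    then have "M = M_of e0" using K_lemma[OF mu c3 e0M] k e0_def by blast
    then show ?thesis using True k e0_def by blast
  next
    case False
    then have sq: "e0 \<circ> e0 \<in> \<C>" and c3': "card (UNIV :: 'a set) = 3"
      using k e0_def c3 by auto
    obtain e where e: "e \<in> M" "e \<notin> \<T>" "e \<circ> e = e"
      using wit_alpha[OF c3' _ sq mon TM dc e0M] k e0_def by blast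
    have "M = M_of e" using K_lemma[OF mu c3 e(1,2)] e(3) by blast
    moreover have "\<not> inj e" using idem_not_inj[OF e(3)] e(2) by (auto simp: T_maps_def)
    ultimately show ?thesis using e by blast
  qed
qed

lemma inj_not_C:
  fixes g :: "'a::finite \<Rightarrow> 'a"
  assumes c3: "card (UNIV :: 'a set) \<ge> 3" and "inj g"
  shows "g \<notin> \<C>"
proof
  assume "g \<in> \<C>"
  then obtain c where c: "g = (\<lambda>_. c)" by (auto simp: in_C_iff)
  have "\<forall>x y :: 'a. x = y" using assms(2) c by (auto simp: inj_def)
  then have "card (UNIV :: 'a set) \<le> 1" using card_le_Suc0_iff_eq[of "UNIV :: 'a set"] by simp
  then show False using c3 by simp
qed

theorem theorem5p3:
  fixes dummy :: "'a::finite"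
  assumes "card (UNIV :: 'a set) \<ge> 3"
  shows "(\<forall>M :: ('a \<Rightarrow> 'a) set. minimal_u_closed M \<longleftrightarrow>
            (\<exists>f. f \<notin> \<T> \<and> M = M_of f \<and>
               (f \<circ> f = f
                \<or> (f \<circ> f \<in> \<C> \<and> card (UNIV :: 'a set) \<ge> 4)
                \<or> (\<exists>p. prime p \<and> f ^^ p = id \<and>
                      (card {x. f x = x} \<ge> 2 \<or> card (cycles_of_length f p) \<ge> 2)))))
      \<and> (\<forall>M :: ('a \<Rightarrow> 'a) set. minimal_u_closed M \<longrightarrow> C_minimal M)"
proof -
  have c3: "card (UNIV :: 'a set) \<ge> 3" using assms .
  have fwd: "\<exists>f. f \<notin> \<T> \<and> M = M_of f \<and> goodc f" if mu: "minimal_u_closed M" for M :: "('a \<Rightarrow> 'a) set"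
  proof -
    have mon: "is_monoid M" and TM: "\<T> \<subset> M" and uc: "u_closed M"
      using mu unfolding minimal_u_closed_def by auto
    have dc: "DC M" using u_closed_props(2)[OF uc] .
    obtain g where gM: "g \<in> M" and gT: "g \<notin> \<T>" using TM by blast
    show ?thesis
    proof (cases "inj g")
      case False
      have "g \<notin> \<C>" using gT by (simp add: T_maps_def)
      then show ?thesis using NI_lemma[OF mu c3 gM False] by blast
    next
      case True
      have gid: "g \<noteq> id" using gT by (simp add: T_maps_def)
      obtain k q where kq: "prime q" "(g ^^ k) ^^ q = id" "g ^^ k \<noteq> id"
        using perm_power[OF True gid] by blast
      define g' where "g' = g ^^ k"
      have g'M: "g' \<in> M" using monoid_pow[OF mon gM] g'_def by simp
      have ig': "inj g'" using True by (simp add: g'_def inj_fn)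
      have g'T: "g' \<notin> \<T>" using inj_not_C[OF c3 ig'] kq(3) g'_def by (simp add: T_maps_def)
      show ?thesis
      proof (cases "card {x. g' x = x} \<ge> 2 \<or> card (cycles_of_length g' q) \<ge> 2")
        case True
        then have gg: "goodc g'" using kq g'_def by blast
        then show ?thesis using K_lemma[OF mu c3 g'M g'T gg] g'T by blast
      next
        case False
        have g'q: "g' ^^ q = id" using kq(2) g'_def by simp
        have g'id: "g' \<noteq> id" using kq(3) g'_def by simp
        have TM': "\<T> \<subseteq> M" using TM by blast
        have nf: "\<not> card {x. g' x = x} \<ge> 2" and nc: "\<not> card (cycles_of_length g' q) \<ge> 2"
          using False by auto
        obtain s where s: "s \<in> M" "\<not> inj s" "s \<notin> \<C>"
          using wit_perm[OF c3 kq(1) g'q g'id nf nc mon TM' dc g'M] by blast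
        obtain e where e: "\<not> inj e" "M = M_of e" using NI_lemma[OF mu c3 s] by blast
        have "g' \<in> M_of e" using g'M e(2) by simp
        then consider "g' \<in> \<C>" | n where "g' = e ^^ n" using M_of_elem by blast
        then show ?thesis
        proof cases
          case 1 then show ?thesis using g'T by (simp add: T_maps_def)
        next
          case 2
          show ?thesis
          proof (cases "n = 0")
            case True then show ?thesis using 2 g'T by (simp add: T_maps_def)
          next
            case False
            then have "\<not> inj g'" using pow_not_inj[OF e(1), of n] 2 by simp
            then show ?thesis using ig' by simp
          qed
        qed
      qed
    qed
  qed
  have part1: "minimal_u_closed M \<longleftrightarrow> (\<exists>f. f \<notin> \<T> \<and> M = M_of f \<and> goodc f)" for M :: "('a \<Rightarrow> 'a) set"
    using fwd minimal_good(1)[OF c3] by blast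
  have part2: "minimal_u_closed M \<longrightarrow> C_minimal M" for M :: "('a \<Rightarrow> 'a) set"
    using fwd minimal_good(2)[OF c3] by blast
  show ?thesis using part1 part2 by blast
qed

end
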